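(* In the setting of the context, with $d=[G:H]$, the degree of the Kanev correspondence is $$\deg\overline K_w=1-d\,((w,w)+1).$$
   Context: $G$ finite group, $\Lambda$ absolutely irreducible $\mathbb Z[G]$-module of finite rank, $W=\Lambda\otimes\mathbb Q$, $w$ a weight ($gw-w\in\Lambda$ for all $g$), $(\,,\,)$ the negative definite $G$-invariant symmetric bilinear form on $W$ with (i) $(w,\lambda)\in\mathbb Z$ for all $\lambda\in\Lambda$ and (ii) every $G$-invariant symmetric form satisfying (i) is an integer multiple of it; $H=\mathrm{Stab}_G(w)$. $\pi:X\to\mathbb P^1$ Galois covering with group $G$, $C=X/H$, $\psi:C\to\mathbb P^1$. Kanev correspondence: $U$ = complement of the branch locus of $\psi$, $\xi_0\in U$, points of $\psi^{-1}(\xi_0)$ labelled by $Gw$ via a fixed $G$-equivariant bijection; for $\xi\in U$ a path $\gamma_\xi$ in $U$ to $\xi_0$ defines $\mu:\psi^{-1}(\xi)\to Gw$ (endpoint of the lift starting at $c$); $\overline K_w$ is the closure in $C\times C$ of the divisor given over $U$ by $\overline K_w(c)=\sum_{v\in Gw,\,v\ne\mu(c)}[(\mu(c),v)-(w,w)-1]\mu^{-1}(v)$. The degree of a correspondence $D$ is the degree of the divisor $D(c)$. *)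

theory Defs
  imports "HOL-Algebra.Coset" "HOL-Analysis.Finite_Cartesian_Product"
begin

text \<open>The lattice Lambda is modelled as the integer points of W = rat^'n
(a choice of Z-basis of Lambda); G acts on Lambda through integer matrices rho g.\<close>

definition lat :: "(rat^'n) set" where
  "lat = {v. \<forall>i. v $ i \<in> \<int>}"

definition act :: "('g \<Rightarrow> int^'n^'n) \<Rightarrow> 'g \<Rightarrow> rat^'n \<Rightarrow> rat^'n" where
  "act \<rho> g v = (\<chi> i. \<Sum>j\<in>UNIV. of_int (\<rho> g $ i $ j) * v $ j)"

definition cact :: "('g \<Rightarrow> int^'n^'n) \<Rightarrow> 'g \<Rightarrow> complex^'n \<Rightarrow> complex^'n" where
  "cact \<rho> g v = (\<chi> i. \<Sum>j\<in>UNIV. of_int (\<rho> g $ i $ j) * v $ j)"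

definition is_int_rep :: "('g, 'b) monoid_scheme \<Rightarrow> ('g \<Rightarrow> int^'n^'n) \<Rightarrow> bool" where
  "is_int_rep G \<rho> \<longleftrightarrow> \<rho> \<one>\<^bsub>G\<^esub> = mat 1 \<and>
     (\<forall>x\<in>carrier G. \<forall>y\<in>carrier G. \<rho> (x \<otimes>\<^bsub>G\<^esub> y) = \<rho> x ** \<rho> y)"

text \<open>Absolute irreducibility: Lambda \<otimes> C = complex^'n has no G-invariant
complex subspaces other than 0 and the whole space.\<close>
definition abs_irreducible :: "('g, 'b) monoid_scheme \<Rightarrow> ('g \<Rightarrow> int^'n^'n) \<Rightarrow> bool" where
  "abs_irreducible G \<rho> \<longleftrightarrow>
    (\<forall>S :: (complex^'n) set.
       0 \<in> S \<and> (\<forall>x\<in>S. \<forall>y\<in>S. x + y \<in> S) \<and> (\<forall>c x. x \<in> S \<longrightarrow> (\<chi> i. c * x $ i) \<in> S)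
       \<and> (\<forall>g\<in>carrier G. \<forall>x\<in>S. cact \<rho> g x \<in> S)
       \<longrightarrow> S = {0} \<or> S = UNIV)"

definition is_weight :: "('g, 'b) monoid_scheme \<Rightarrow> ('g \<Rightarrow> int^'n^'n) \<Rightarrow> rat^'n \<Rightarrow> bool" where
  "is_weight G \<rho> w \<longleftrightarrow> (\<forall>g\<in>carrier G. act \<rho> g w - w \<in> lat)"

definition bil :: "rat^'n^'n \<Rightarrow> rat^'n \<Rightarrow> rat^'n \<Rightarrow> rat" where
  "bil B x y = (\<Sum>i\<in>UNIV. \<Sum>j\<in>UNIV. x $ i * B $ i $ j * y $ j)"

definition sym_inv_form :: "('g, 'b) monoid_scheme \<Rightarrow> ('g \<Rightarrow> int^'n^'n) \<Rightarrow> rat^'n^'n \<Rightarrow> bool" where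
  "sym_inv_form G \<rho> B \<longleftrightarrow> (\<forall>i j. B $ i $ j = B $ j $ i) \<and>
     (\<forall>g\<in>carrier G. \<forall>x y. bil B (act \<rho> g x) (act \<rho> g y) = bil B x y)"

definition normalized_form ::
  "('g, 'b) monoid_scheme \<Rightarrow> ('g \<Rightarrow> int^'n^'n) \<Rightarrow> rat^'n \<Rightarrow> rat^'n^'n \<Rightarrow> bool" where
  "normalized_form G \<rho> w B \<longleftrightarrow> sym_inv_form G \<rho> B \<and>
     (\<forall>x. x \<noteq> 0 \<longrightarrow> bil B x x < 0) \<and>
     (\<forall>l\<in>lat. bil B w l \<in> \<int>) \<and>
     (\<forall>B'. sym_inv_form G \<rho> B' \<and> (\<forall>l\<in>lat. bil B' w l \<in> \<int>) \<longrightarrow>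
        (\<exists>k::int. \<forall>x y. bil B' x y = of_int k * bil B x y))"

definition orbit :: "('g, 'b) monoid_scheme \<Rightarrow> ('g \<Rightarrow> int^'n^'n) \<Rightarrow> rat^'n \<Rightarrow> (rat^'n) set" where
  "orbit G \<rho> w = (\<lambda>g. act \<rho> g w) ` carrier G"

definition stab :: "('g, 'b) monoid_scheme \<Rightarrow> ('g \<Rightarrow> int^'n^'n) \<Rightarrow> rat^'n \<Rightarrow> 'g set" where
  "stab G \<rho> w = {g \<in> carrier G. act \<rho> g w = w}"

text \<open>Kanev divisor K_w(c) on the fibre F = psi^{-1}(xi) over a point xi of U,
with labelling mu : F -> Gw (a bijection): it is
sum_{v in Gw, v \<noteq> mu c} [(mu c, v) - (w,w) - 1] mu^{-1}(v),
represented as a (rational-valued) divisor, i.e. a function with finite support.\<close>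
definition kanev_divisor ::
  "rat^'n^'n \<Rightarrow> rat^'n \<Rightarrow> 'c set \<Rightarrow> ('c \<Rightarrow> rat^'n) \<Rightarrow> 'c \<Rightarrow> 'c \<Rightarrow> rat" where
  "kanev_divisor B w F \<mu> c = (\<lambda>p. if p \<in> F \<and> \<mu> p \<noteq> \<mu> c
       then bil B (\<mu> c) (\<mu> p) - bil B w w - 1 else 0)"

definition divisor_degree :: "('c \<Rightarrow> rat) \<Rightarrow> rat" where
  "divisor_degree D = (\<Sum>p\<in>{p. D p \<noteq> 0}. D p)"

end

theory Submission
  imports Defs
begin

lemma act_add: "act \<rho> g (x + y) = act \<rho> g x + act \<rho> g y"
  by (simp add: act_def vec_eq_iff algebra_simps sum.distrib)

lemma act_zero: "act \<rho> g 0 = 0"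
  by (simp add: act_def vec_eq_iff)

lemma act_sum: "act \<rho> g (sum f A) = (\<Sum>a\<in>A. act \<rho> g (f a))"
  by (induction A rule: infinite_finite_induct) (auto simp: act_zero act_add)

lemma bil_add: "bil B u (x + y) = bil B u x + bil B u y"
  by (simp add: bil_def algebra_simps sum.distrib)

lemma bil_zero: "bil B u 0 = 0"
  by (simp add: bil_def)

lemma bil_sum: "bil B u (sum f A) = (\<Sum>a\<in>A. bil B u (f a))"
  by (induction A rule: infinite_finite_induct) (auto simp: bil_zero bil_add)

lemma act_mult:
  assumes "is_int_rep G \<rho>" "x \<in> carrier G" "y \<in> carrier G"
  shows "act \<rho> (x \<otimes>\<^bsub>G\<^esub> y) v = act \<rho> x (act \<rho> y v)"
proof -
  have r: "\<rho> (x \<otimes>\<^bsub>G\<^esub> y) = \<rho> x ** \<rho> y" using assms unfolding is_int_rep_def by blast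
  show ?thesis
    unfolding act_def r
    by (simp add: vec_eq_iff matrix_matrix_mult_def of_int_sum sum_distrib_left
          sum_distrib_right mult.assoc) (intro allI sum.swap)
qed

lemma act_one:
  assumes "is_int_rep G \<rho>"
  shows "act \<rho> \<one>\<^bsub>G\<^esub> v = v"
proof -
  have r: "\<rho> \<one>\<^bsub>G\<^esub> = mat 1" using assms unfolding is_int_rep_def by blast
  have "\<And>i. (\<Sum>j\<in>UNIV. rat_of_int (if i = j then 1 else 0) * v $ j) = (\<Sum>j\<in>UNIV. if i = j then v$j else 0)"
    by (intro sum.cong) auto
  then show ?thesis unfolding act_def r by (simp add: vec_eq_iff mat_def)
qed

lemma cact_line:
  "cact \<rho> g (\<chi> i. t * of_rat (s $ i)) = (\<chi> i. t * of_rat (act \<rho> g s $ i))"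
  by (simp add: cact_def act_def vec_eq_iff of_rat_sum of_rat_mult sum_distrib_left mult.left_commute)

lemma cact_axis:
  "cact \<rho> g (axis j 1) $ i = of_int (\<rho> g $ i $ j)"
proof -
  have "(\<Sum>k\<in>UNIV. complex_of_int (\<rho> g $ i $ k) * axis j 1 $ k) = (\<Sum>k\<in>UNIV. if k = j then complex_of_int (\<rho> g $ i $ k) else 0)"
    by (intro sum.cong) (auto simp: axis_def)
  then show ?thesis by (simp add: cact_def)
qed

lemma main_aux:
  fixes G :: "('g, 'b) monoid_scheme" (structure)
    and \<rho> :: "'g \<Rightarrow> int^'n^'n"
    and w :: "rat^'n"
    and B :: "rat^'n^'n"
    and F :: "'c set"
    and \<mu> :: "'c \<Rightarrow> rat^'n"
    and c :: 'c
  assumes "group G" and "finite (carrier G)"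
    and "is_int_rep G \<rho>"
    and "abs_irreducible G \<rho>"
    and "\<exists>g\<in>carrier G. \<rho> g \<noteq> mat 1"
    and "is_weight G \<rho> w"
    and "normalized_form G \<rho> w B"
    and "finite F" and "bij_betw \<mu> F (orbit G \<rho> w)" and "c \<in> F"
  shows "divisor_degree (kanev_divisor B w F \<mu> c)
           = 1 - of_nat (card (rcosets\<^bsub>G\<^esub> (stab G \<rho> w))) * (bil B w w + 1)"
proof -
  interpret group G by fact
  note rep = assms(3)
  define H where "H = stab G \<rho> w"
  define Orb where "Orb = orbit G \<rho> w"
  have finOrb: "finite Orb" unfolding Orb_def orbit_def using assms(2) by simp
  have invact: "act \<rho> (inv g) (act \<rho> g v) = v" if "g \<in> carrier G" for g v
    using that act_mult[OF rep, of "inv g" g v, symmetric] act_one[OF rep] by simp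
  have injact: "inj_on (act \<rho> g) A" if "g \<in> carrier G" for g A
    by (metis inj_onI invact that)
  have perm: "act \<rho> g ` Orb = Orb" if g: "g \<in> carrier G" for g
  proof
    show "act \<rho> g ` Orb \<subseteq> Orb"
    proof
      fix v assume "v \<in> act \<rho> g ` Orb"
      then obtain h where h: "h \<in> carrier G" "v = act \<rho> g (act \<rho> h w)" unfolding Orb_def orbit_def by auto
      then have "v = act \<rho> (g \<otimes> h) w" using g act_mult[OF rep] by simp
      then show "v \<in> Orb" unfolding Orb_def orbit_def using g h by auto
    qed
    show "Orb \<subseteq> act \<rho> g ` Orb"
    proof
      fix v assume "v \<in> Orb"
      then obtain h where h: "h \<in> carrier G" "v = act \<rho> h w" unfolding Orb_def orbit_def by auto
      have "v = act \<rho> g (act \<rho> (inv g \<otimes> h) w)"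
        using h g act_mult[OF rep] by (simp add: m_assoc[symmetric] r_inv act_one[OF rep] flip: act_mult[OF rep])
      moreover have "act \<rho> (inv g \<otimes> h) w \<in> Orb" unfolding Orb_def orbit_def using g h by auto
      ultimately show "v \<in> act \<rho> g ` Orb" by blast
    qed
  qed
  define s where "s = (\<Sum>v\<in>Orb. v)"
  have sfix: "act \<rho> g s = s" if g: "g \<in> carrier G" for g
  proof -
    have "act \<rho> g s = (\<Sum>v\<in>Orb. act \<rho> g v)" unfolding s_def by (rule act_sum)
    also have "\<dots> = (\<Sum>v\<in>act \<rho> g ` Orb. v)" using sum.reindex[OF injact[OF g, of Orb], of "\<lambda>v. v"] by simp
    also have "\<dots> = s" using perm[OF g] s_def by simp
    finally show ?thesis .
  qed
  have s0: "s = 0"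
  proof (rule ccontr)
    assume sn: "s \<noteq> 0"
    define S where "S = {x :: complex^'n. \<exists>t. x = (\<chi> i. t * of_rat (s $ i))}"
    have "S = {0} \<or> S = UNIV"
    proof -
      have "0 \<in> S" unfolding S_def by (auto intro!: exI[of _ 0] simp: vec_eq_iff)
      moreover have "\<forall>x\<in>S. \<forall>y\<in>S. x + y \<in> S"
      proof (intro ballI)
        fix x y assume "x \<in> S" "y \<in> S"
        then obtain t1 t2 where "x = (\<chi> i. t1 * of_rat (s $ i))" "y = (\<chi> i. t2 * of_rat (s $ i))"
          unfolding S_def by blast
        then have "x + y = (\<chi> i. (t1 + t2) * of_rat (s $ i))" by (simp add: vec_eq_iff algebra_simps)
        then show "x + y \<in> S" unfolding S_def by blast
      qed
      moreover have "\<forall>c x. x \<in> S \<longrightarrow> (\<chi> i. c * x $ i) \<in> S"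
      proof (intro allI impI)
        fix c x assume "x \<in> S"
        then obtain t where "x = (\<chi> i. t * of_rat (s $ i))" unfolding S_def by blast
        then have "(\<chi> i. c * x $ i) = (\<chi> i. (c * t) * of_rat (s $ i))" by (simp add: vec_eq_iff algebra_simps)
        then show "(\<chi> i. c * x $ i) \<in> S" unfolding S_def by blast
      qed
      moreover have "\<forall>g\<in>carrier G. \<forall>x\<in>S. cact \<rho> g x \<in> S"
        unfolding S_def using sfix by (auto simp: cact_line)
      ultimately show ?thesis using assms(4) unfolding abs_irreducible_def by blast
    qed
    moreover have "S \<noteq> {0}"
    proof
      assume "S = {0}"
      moreover have "(\<chi> i. 1 * of_rat (s $ i)) \<in> S" unfolding S_def by blast
      ultimately have "(\<chi> i. (of_rat (s $ i) :: complex)) = 0" by simp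
      then have "s = 0" by (simp add: vec_eq_iff)
      with sn show False by simp
    qed
    ultimately have SU: "S = UNIV" by simp
    obtain g where g: "g \<in> carrier G" "\<rho> g \<noteq> mat 1" using assms(5) by blast
    have fix_all: "cact \<rho> g x = x" for x
    proof -
      have "x \<in> S" using SU by simp
      then obtain t where "x = (\<chi> i. t * of_rat (s $ i))" unfolding S_def by blast
      then show ?thesis using sfix[OF g(1)] by (simp add: cact_line)
    qed
    have "\<rho> g $ i $ j = mat 1 $ i $ j" for i j
    proof -
      have "cact \<rho> g (axis j 1) $ i = axis j 1 $ i" using fix_all by simp
      then have "(of_int (\<rho> g $ i $ j) :: complex) = axis j 1 $ i"
        by (simp only: cact_axis)
      then have "(of_int (\<rho> g $ i $ j) :: complex) = (if i = j then 1 else 0)"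
        by (simp add: axis_def)
      then show ?thesis by (cases "i = j") (auto simp: mat_def)
    qed
    then have "\<rho> g = mat 1" by (simp add: vec_eq_iff)
    with g show False by simp
  qed
  have subH: "subgroup H G"
  proof (rule subgroupI)
    show "H \<subseteq> carrier G" unfolding H_def stab_def by auto
    show "H \<noteq> {}" unfolding H_def stab_def using act_one[OF rep] by auto
    show "inv a \<in> H" if "a \<in> H" for a
      using that invact[of a w] unfolding H_def stab_def by auto
    show "a \<otimes> b \<in> H" if "a \<in> H" "b \<in> H" for a b
      using that act_mult[OF rep, of a b w] unfolding H_def stab_def by auto
  qed
  have finH: "finite H" unfolding H_def stab_def using assms(2) by simp
  have oneH: "\<one> \<in> H" using subH subgroup.one_closed by blast
  have cardOrbrb: "card Orb * card H = order G"
  proof -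
    define A where "A v = {g \<in> carrier G. act \<rho> g w = v}" for v
    have U: "carrier G = (\<Union>v\<in>Orb. A v)" unfolding A_def Orb_def orbit_def by auto
    have fib: "card (A v) = card H" if "v \<in> Orb" for v
    proof -
      obtain g0 where g0: "g0 \<in> carrier G" "v = act \<rho> g0 w" using \<open>v \<in> Orb\<close> unfolding Orb_def orbit_def by auto
      have "A v = (\<lambda>h. g0 \<otimes> h) ` H"
      proof
        show "A v \<subseteq> (\<lambda>h. g0 \<otimes> h) ` H"
        proof
          fix g assume "g \<in> A v"
          then have g: "g \<in> carrier G" "act \<rho> g w = act \<rho> g0 w" unfolding A_def g0 by auto
          have "act \<rho> (inv g0 \<otimes> g) w = w"
            using g g0 act_mult[OF rep] invact by simp
          then have "inv g0 \<otimes> g \<in> H" unfolding H_def stab_def using g g0 by auto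
          moreover have "g = g0 \<otimes> (inv g0 \<otimes> g)" using g g0 by (simp add: m_assoc[symmetric])
          ultimately show "g \<in> (\<lambda>h. g0 \<otimes> h) ` H" by blast
        qed
        show "(\<lambda>h. g0 \<otimes> h) ` H \<subseteq> A v"
          using g0 act_mult[OF rep] unfolding A_def H_def stab_def by auto
      qed
      moreover have "inj_on (\<lambda>h. g0 \<otimes> h) H"
        using g0 unfolding H_def stab_def by (auto intro!: inj_onI)
      ultimately show ?thesis by (simp add: card_image)
    qed
    have "order G = card (\<Union>v\<in>Orb. A v)" unfolding order_def using U by simp
    also have "\<dots> = (\<Sum>v\<in>Orb. card (A v))"
      by (rule card_UN_disjoint) (use finOrb assms(2) in \<open>auto simp: A_def\<close>)
    also have "\<dots> = card Orb * card H" using fib by simp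
    finally show ?thesis by simp
  qed
  have "card (rcosets H) * card H = order G" using lagrange[OF subH] .
  with cardOrbrb have dOrb: "card (rcosets H) = card Orb"
    using finH oneH by (metis card_0_eq empty_iff mult_right_cancel)
  define u where "u = \<mu> c"
  define k where "k = bil B w w"
  have uOrb: "u \<in> Orb" using assms(9,10) unfolding u_def Orb_def bij_betw_def by auto
  obtain g0 where g0: "g0 \<in> carrier G" "u = act \<rho> g0 w" using uOrb unfolding Orb_def orbit_def by auto
  have buu: "bil B u u = k"
    using assms(7) g0 unfolding normalized_form_def sym_inv_form_def k_def by auto
  have bsum: "(\<Sum>v\<in>Orb. bil B u v) = 0"
    using bil_sum[of B u "\<lambda>v. v" Orb] s0 bil_zero[of B u] unfolding s_def by metis
  define D where "D = kanev_divisor B w F \<mu> c"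
  have "divisor_degree D = (\<Sum>p\<in>F. D p)"
    unfolding divisor_degree_def
    by (rule sum.mono_neutral_left) (auto simp: D_def kanev_divisor_def assms(8) split: if_splits)
  also have "\<dots> = (\<Sum>p\<in>F. (\<lambda>v. if v \<noteq> u then bil B u v - k - 1 else 0) (\<mu> p))"
    by (intro sum.cong) (auto simp: D_def kanev_divisor_def u_def k_def)
  also have "\<dots> = (\<Sum>v\<in>Orb. if v \<noteq> u then bil B u v - k - 1 else 0)"
    using sum.reindex_bij_betw[OF assms(9)[folded Orb_def]] by simp
  also have "\<dots> = (\<Sum>v\<in>Orb - {u}. bil B u v - k - 1)"
    by (rule sum.mono_neutral_cong_right) (use finOrb in auto)
  also have "\<dots> = (\<Sum>v\<in>Orb - {u}. bil B u v) - of_nat (card (Orb - {u})) * (k + 1)"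
    by (simp add: sum_subtractf algebra_simps)
  also have "(\<Sum>v\<in>Orb - {u}. bil B u v) = - k"
    using sum.remove[OF finOrb uOrb, of "bil B u"] bsum buu by simp
  also have "card (Orb - {u}) = card Orb - 1" using uOrb finOrb by simp
  also have "of_nat (card Orb - 1) = (of_nat (card Orb) :: rat) - 1"
  proof -
    have "card Orb > 0" using uOrb finOrb card_gt_0_iff by blast
    then show ?thesis by (simp add: of_nat_diff)
  qed
  finally have "divisor_degree D = - k - (of_nat (card Orb) - 1) * (k + 1)" .
  then have "divisor_degree D = 1 - of_nat (card Orb) * (k + 1)" by (simp add: algebra_simps)
  then show ?thesis unfolding D_def H_def[symmetric] dOrb k_def .
qed

theorem corollary3p8:
  fixes G :: "('g, 'b) monoid_scheme"
    and \<rho> :: "'g \<Rightarrow> int^'n^'n"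
    and w :: "rat^'n"
    and B :: "rat^'n^'n"
    and F :: "'c set"
    and \<mu> :: "'c \<Rightarrow> rat^'n"
    and c :: 'c
  assumes "group G" and "finite (carrier G)"
    and "is_int_rep G \<rho>"
    and "abs_irreducible G \<rho>"
    and "\<exists>g\<in>carrier G. \<rho> g \<noteq> mat 1"
    and "is_weight G \<rho> w"
    and "normalized_form G \<rho> w B"
    and "finite F" and "bij_betw \<mu> F (orbit G \<rho> w)" and "c \<in> F"
  shows "divisor_degree (kanev_divisor B w F \<mu> c)
           = 1 - of_nat (card (rcosets\<^bsub>G\<^esub> (stab G \<rho> w))) * (bil B w w + 1)"
  using main_aux[OF assms] .

end
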